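(* Let $w\in\mathbb{R}^n$ with $w\ge0$, $W=ww^\top$, and integers $p,q\in\{1,\dots,n\}$, $r=pq$. Then the optimal value of the linear program $$\max\ \sum_{i=1}^n\sum_{j=1}^n W_{ij}t_{ij}\ \text{ s.t. }\ \sum_{j=1}^n t_{ij}\le q\ (\forall i),\ \sum_{i=1}^n t_{ij}\le p\ (\forall j),\ \sum_{i,j}t_{ij}\le r,\ 0\le t_{ij}\le1\ (\forall i,j)$$ equals $\sum_{i=1}^p\sum_{j=1}^q w_{[i]}w_{[j]}$.
   Context: $w_{[i]}$ denotes the $i$-th largest entry of $w$. *)

theory Defs
  imports Complex_Main
begin

text \<open>Vectors in R^n are represented as functions nat => real on indices 0..n-1.
  largest_entry w n k is the (k+1)-th largest entry of (w 0, ..., w (n-1)),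
  i.e. w_[k+1] in the paper's 1-based notation.\<close>
definition largest_entry :: "(nat \<Rightarrow> real) \<Rightarrow> nat \<Rightarrow> nat \<Rightarrow> real" where
  "largest_entry w n k = rev (sort (map w [0..<n])) ! k"

definition lp_feasible :: "nat \<Rightarrow> nat \<Rightarrow> nat \<Rightarrow> (nat \<Rightarrow> nat \<Rightarrow> real) \<Rightarrow> bool" where
  "lp_feasible n p q t \<longleftrightarrow>
     (\<forall>i<n. (\<Sum>j<n. t i j) \<le> real q) \<and>
     (\<forall>j<n. (\<Sum>i<n. t i j) \<le> real p) \<and>
     (\<Sum>i<n. \<Sum>j<n. t i j) \<le> real (p * q) \<and>
     (\<forall>i<n. \<forall>j<n. 0 \<le> t i j \<and> t i j \<le> 1)"

definition lp_objective :: "nat \<Rightarrow> (nat \<Rightarrow> real) \<Rightarrow> (nat \<Rightarrow> nat \<Rightarrow> real) \<Rightarrow> real" where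
  "lp_objective n w t = (\<Sum>i<n. \<Sum>j<n. (w i * w j) * t i j)"

end

theory Submission imports Defs "HOL-Library.Multiset" begin
lemma sortmap: "sort (map w xs) = map (w::nat\<Rightarrow>real) (sort_key w xs)"
  by (rule properties_for_sort) (simp_all add: mset_map)

definition LL :: "(nat \<Rightarrow> real) \<Rightarrow> nat \<Rightarrow> nat list" where
  "LL w n = rev (sort_key w [0..<n])"

lemma LL_props: "distinct (LL w n)" "set (LL w n) = {..<n}" "length (LL w n) = n"
  by (auto simp: LL_def)

lemma le_LL: "k < n \<Longrightarrow> largest_entry w n k = w (LL w n ! k)"
  by (simp add: largest_entry_def LL_def sortmap rev_map)

lemma le_anti: "i \<le> j \<Longrightarrow> j < n \<Longrightarrow> largest_entry w n j \<le> largest_entry w n i"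
  unfolding largest_entry_def
  by (simp add: rev_nth sorted_nth_mono)

lemma reidx: "(\<Sum>i<n. f i) = (\<Sum>m<n. f (LL w n ! m))"
proof -
  have "bij_betw ((!) (LL w n)) {..<n} {..<n}"
    by (rule bij_betw_nth) (auto simp: LL_props)
  then show ?thesis by (simp add: sum.reindex_bij_betw)
qed

lemma knap_sorted:
  fixes a x :: "nat \<Rightarrow> real"
  assumes anti: "\<And>i j. i \<le> j \<Longrightarrow> j < n \<Longrightarrow> a j \<le> a i"
    and nn: "\<And>i. i < n \<Longrightarrow> 0 \<le> a i"
    and xb: "\<And>i. i < n \<Longrightarrow> 0 \<le> x i \<and> x i \<le> c"
    and sx: "(\<Sum>i<n. x i) \<le> real k * c" and kn: "k \<le> n"
  shows "(\<Sum>i<n. a i * x i) \<le> c * (\<Sum>i<k. a i)"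
proof (cases "n = 0")
  case True then show ?thesis using kn by simp
next
  case False
  define v where "v = a (k - 1)"
  have "k - 1 < n" using False kn by simp
  then have v0: "0 \<le> v" using nn unfolding v_def by simp
  have hterm: "a i * x i - (if i < k then c * a i else 0) \<le> v * (x i - (if i < k then c else 0))"
    if "i < n" for i
  proof (cases "i < k")
    case True
    have "v \<le> a i" unfolding v_def using anti[of i "k-1"] True kn by simp
    moreover have "x i - c \<le> 0" using xb[OF that] by simp
    ultimately have "0 \<le> (a i - v) * (c - x i)" by simp
    then show ?thesis using True by (simp add: algebra_simps)
  next
    case False
    have "a i \<le> v" unfolding v_def using anti[of "k-1" i] False that by simp
    then show ?thesis using False xb[OF that] by (simp add: mult_right_mono)
  qed
  have "(\<Sum>i<n. a i * x i - (if i < k then c * a i else 0)) \<le> (\<Sum>i<n. v * (x i - (if i < k then c else 0)))"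
    by (rule sum_mono) (use hterm in auto)
  also have "\<dots> = v * ((\<Sum>i<n. x i) - real k * c)"
  proof -
    have e: "{..<n} \<inter> {i. i < k} = {..<k}" using kn by auto
    have "(\<Sum>i<n. (if i < k then c else 0)) = (\<Sum>i<k. c)"
      by (simp add: sum.If_cases e)
    then show ?thesis by (simp add: sum_subtractf sum_distrib_left[symmetric] algebra_simps)
  qed
  also have "\<dots> \<le> 0" using v0 sx by (simp add: mult_nonneg_nonpos)
  finally have "(\<Sum>i<n. a i * x i) - (\<Sum>i<n. (if i < k then c * a i else 0)) \<le> 0"
    by (simp add: sum_subtractf)
  moreover have "(\<Sum>i<n. (if i < k then c * a i else 0)) = c * (\<Sum>i<k. a i)"
  proof -
    have "{..<n} \<inter> {i. i < k} = {..<k}" using kn by auto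
    then show ?thesis by (simp add: sum.If_cases sum_distrib_left)
  qed
  ultimately show ?thesis by simp
qed
lemma knap:
  fixes w x :: "nat \<Rightarrow> real"
  assumes w0: "\<forall>i<n. 0 \<le> w i"
    and xb: "\<And>i. i < n \<Longrightarrow> 0 \<le> x i \<and> x i \<le> c"
    and sx: "(\<Sum>i<n. x i) \<le> real k * c" and kn: "k \<le> n"
  shows "(\<Sum>i<n. w i * x i) \<le> c * (\<Sum>m<k. largest_entry w n m)"
proof -
  let ?L = "LL w n"
  have Lin: "m < n \<Longrightarrow> ?L ! m < n" for m using LL_props(2,3)[of w n]
    by (metis lessThan_iff nth_mem)
  have "(\<Sum>i<n. w i * x i) = (\<Sum>m<n. w (?L!m) * x (?L!m))" by (rule reidx)
  also have "\<dots> = (\<Sum>m<n. largest_entry w n m * x (?L!m))"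
    by (rule sum.cong) (auto simp: le_LL)
  also have "\<dots> \<le> c * (\<Sum>m<k. largest_entry w n m)"
  proof (rule knap_sorted)
    show "\<And>i j. i \<le> j \<Longrightarrow> j < n \<Longrightarrow> largest_entry w n j \<le> largest_entry w n i"
      by (rule le_anti)
    show "\<And>i. i < n \<Longrightarrow> 0 \<le> largest_entry w n i" using w0 Lin by (simp add: le_LL)
    show "\<And>i. i < n \<Longrightarrow> 0 \<le> x (?L!i) \<and> x (?L!i) \<le> c" using xb Lin by blast
    have "(\<Sum>i<n. x (?L!i)) = (\<Sum>i<n. x i)" by (rule reidx[symmetric])
    then show "(\<Sum>i<n. x (?L!i)) \<le> real k * c" using sx by simp
    show "k \<le> n" by fact
  qed
  finally show ?thesis .
qed

lemma indsum: "(A::nat set) \<subseteq> {..<n} \<Longrightarrow> (\<Sum>j<n. (if j \<in> A then 1 else 0 :: real)) = real (card A)"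
proof -
  assume "A \<subseteq> {..<n}"
  then have "{..<n} \<inter> A = A" by auto
  moreover have "(\<Sum>j<n. (if j \<in> A then 1 else 0 :: real)) = (\<Sum>j\<in>{..<n} \<inter> A. 1)"
    by (rule sum.inter_restrict[symmetric]) simp
  ultimately show ?thesis by simp
qed

theorem mainTheorem18:
  fixes n p q :: nat and w :: "nat \<Rightarrow> real"
  assumes "\<forall>i<n. 0 \<le> w i"
    and "1 \<le> p" "p \<le> n" and "1 \<le> q" "q \<le> n"
  shows "(\<exists>t. lp_feasible n p q t \<and>
            lp_objective n w t = (\<Sum>i<p. \<Sum>j<q. largest_entry w n i * largest_entry w n j))
       \<and> (\<forall>t. lp_feasible n p q t \<longrightarrow>
            lp_objective n w t \<le> (\<Sum>i<p. \<Sum>j<q. largest_entry w n i * largest_entry w n j))"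
proof
  define S where "S k = (\<Sum>m<k. largest_entry w n m)" for k
  have tgt: "(\<Sum>i<p. \<Sum>j<q. largest_entry w n i * largest_entry w n j) = S p * S q"
    unfolding S_def by (rule sum_product[symmetric])
  let ?L = "LL w n"
  have "bij_betw ((!) ?L) {..<n} {..<n}"
    by (rule bij_betw_nth) (auto simp: LL_props)
  then have injn: "inj_on ((!) ?L) {..<n}" by (rule bij_betw_imp_inj_on)
  have Lin: "m < n \<Longrightarrow> ?L ! m < n" for m using LL_props(2,3)[of w n]
    by (metis lessThan_iff nth_mem)
  have setfacts: "card ((!) ?L ` {..<k}) = k \<and> (!) ?L ` {..<k} \<subseteq> {..<n}
      \<and> (\<Sum>i\<in>(!) ?L ` {..<k}. w i) = S k" if kn: "k \<le> n" for k
  proof -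
    have sub: "{..<k} \<subseteq> {..<n}" using kn by auto
    have inj: "inj_on ((!) ?L) {..<k}" by (rule inj_on_subset[OF injn sub])
    have "(\<Sum>i\<in>(!) ?L ` {..<k}. w i) = (\<Sum>m<k. w (?L ! m))"
      by (rule sum.reindex[OF inj, unfolded comp_def])
    also have "\<dots> = S k" unfolding S_def
    proof (rule sum.cong)
      fix m assume "m \<in> {..<k}"
      then have "m < n" using kn by simp
      then show "w (?L ! m) = largest_entry w n m" by (simp add: le_LL)
    qed simp
    finally have s: "(\<Sum>i\<in>(!) ?L ` {..<k}. w i) = S k" .
    have c: "card ((!) ?L ` {..<k}) = k" using card_image[OF inj] by simp
    have i: "(!) ?L ` {..<k} \<subseteq> {..<n}" using Lin sub by auto
    show ?thesis using s c i by blast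
  qed
  define P where "P = (!) ?L ` {..<p}"
  define Q where "Q = (!) ?L ` {..<q}"
  note FP = setfacts[OF assms(3), folded P_def]
  note FQ = setfacts[OF assms(5), folded Q_def]
  define t where "t i j = (if i \<in> P then 1 else 0) * (if j \<in> Q then 1 else (0::real))" for i j
  show "\<exists>t. lp_feasible n p q t \<and>
            lp_objective n w t = (\<Sum>i<p. \<Sum>j<q. largest_entry w n i * largest_entry w n j)"
  proof (intro exI conjI)
    have rs: "(\<Sum>j<n. t i j) = (if i \<in> P then 1 else 0) * real q" for i
      unfolding t_def using FQ by (simp add: sum_distrib_left[symmetric] indsum)
    have cs: "(\<Sum>i<n. t i j) = (if j \<in> Q then 1 else 0) * real p" for j
      unfolding t_def using FP by (simp add: sum_distrib_right[symmetric] indsum)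
    have ts: "(\<Sum>i<n. \<Sum>j<n. t i j) = real p * real q"
      using FP by (simp add: rs sum_distrib_right[symmetric] indsum)
    show "lp_feasible n p q t"
      unfolding lp_feasible_def ts by (simp add: rs cs) (simp add: t_def)
    have "lp_objective n w t = (\<Sum>i<n. w i * (if i \<in> P then 1 else 0)) * (\<Sum>j<n. w j * (if j \<in> Q then 1 else 0))"
      unfolding lp_objective_def t_def sum_product by (simp add: mult_ac)
    also have "\<dots> = (\<Sum>i\<in>P. w i) * (\<Sum>j\<in>Q. w j)"
    proof -
      have a: "{..<n} \<inter> P = P" "{..<n} \<inter> Q = Q" using FP FQ by auto
      show ?thesis by (simp add: sum.If_cases a if_distrib[of "\<lambda>x. w _ * x"] cong: if_cong)
    qed
    also have "\<dots> = S p * S q" using FP FQ by simp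
    finally show "lp_objective n w t = (\<Sum>i<p. \<Sum>j<q. largest_entry w n i * largest_entry w n j)"
      using tgt by simp
  qed
  show "\<forall>t. lp_feasible n p q t \<longrightarrow>
            lp_objective n w t \<le> (\<Sum>i<p. \<Sum>j<q. largest_entry w n i * largest_entry w n j)"
  proof (intro allI impI)
    fix t assume f: "lp_feasible n p q t"
    then have row: "\<And>i. i < n \<Longrightarrow> (\<Sum>j<n. t i j) \<le> real q"
      and col: "\<And>j. j < n \<Longrightarrow> (\<Sum>i<n. t i j) \<le> real p"
      and tot: "(\<Sum>i<n. \<Sum>j<n. t i j) \<le> real (p * q)"
      and bd: "\<And>i j. i < n \<Longrightarrow> j < n \<Longrightarrow> 0 \<le> t i j \<and> t i j \<le> 1"
      unfolding lp_feasible_def by auto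
    define r where "r i = (\<Sum>j<n. w j * t i j)" for i
    have obj: "lp_objective n w t = (\<Sum>i<n. w i * r i)"
      unfolding lp_objective_def r_def by (simp add: sum_distrib_left mult.assoc)
    have r0: "0 \<le> r i" if "i < n" for i
      unfolding r_def using bd that assms(1) by (intro sum_nonneg) auto
    have rb: "r i \<le> S q" if "i < n" for i
    proof -
      have "(\<Sum>j<n. w j * t i j) \<le> 1 * (\<Sum>m<q. largest_entry w n m)"
      proof (rule knap[OF assms(1)])
        show "\<And>j. j < n \<Longrightarrow> 0 \<le> t i j \<and> t i j \<le> 1" using bd[OF that] by blast
        show "(\<Sum>j<n. t i j) \<le> real q * 1" using row[OF that] by simp
        show "q \<le> n" by fact
      qed
      then show ?thesis unfolding r_def S_def by simp
    qed
    have "(\<Sum>i<n. r i) = (\<Sum>j<n. \<Sum>i<n. w j * t i j)"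
      unfolding r_def by (rule sum.swap)
    also have "\<dots> = (\<Sum>j<n. w j * (\<Sum>i<n. t i j))"
      by (simp add: sum_distrib_left)
    also have "\<dots> \<le> real p * S q"
      unfolding S_def
    proof (rule knap[OF assms(1)])
      show "0 \<le> (\<Sum>i<n. t i j) \<and> (\<Sum>i<n. t i j) \<le> real p" if "j < n" for j
        using col[OF that] bd that by (auto intro: sum_nonneg)
      have "(\<Sum>j<n. \<Sum>i<n. t i j) = (\<Sum>i<n. \<Sum>j<n. t i j)"
        by (rule sum.swap)
      then show "(\<Sum>j<n. \<Sum>i<n. t i j) \<le> real q * real p"
        using tot by (simp add: mult.commute)
      show "q \<le> n" by fact
    qed
    finally have sr: "(\<Sum>i<n. r i) \<le> real p * S q" .
    have "(\<Sum>i<n. w i * r i) \<le> S q * S p"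
      unfolding S_def[of p]
    proof (rule knap[OF assms(1)])
      show "0 \<le> r i \<and> r i \<le> S q" if "i < n" for i using r0[OF that] rb[OF that] by simp
      show "(\<Sum>i<n. r i) \<le> real p * S q" by fact
      show "p \<le> n" by fact
    qed
    then show "lp_objective n w t \<le> (\<Sum>i<p. \<Sum>j<q. largest_entry w n i * largest_entry w n j)"
      using obj tgt by (simp add: mult.commute)
  qed
qed
end
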